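(* Let $\lambda_b>0$, $\alpha>2$, $P>0$, $N>0$, $M\ge 1$ and $\mu\in[1,2]$. Let $(X_{11},X_{21})$ have joint probability density $(2\pi\lambda_b)^2x_{11}x_{21}e^{-\pi\lambda_b x_{21}^2}$ for $0<x_{11}<x_{21}$ and $0$ otherwise, and let $\mathbb{A}_{UE}=\{X_{11}\le M^{\frac{1}{\alpha\mu}}(N/P)^{\frac{2-\mu}{\alpha\mu}}X_{21}^{2/\mu}\}$. Then the probability density function of $X_{11}$ conditioned on $\mathbb{A}_{UE}$ is, for $x_{11}>0$, $$f_{X_{11}}(x_{11}\mid\mathbb{A}_{UE})=\frac{2\pi\lambda_b\,x_{11}\,\exp\!\Big(-\pi\lambda_b\max^2\Big(x_{11},\,x_{11}^{\mu/2}\big(\tfrac{P}{N}\big)^{\frac{2-\mu}{2\alpha}}\big(\tfrac{1}{M}\big)^{\frac{1}{2\alpha}}\Big)\Big)}{\mathbb{P}[\mathbb{A}_{UE}]},$$ where $\max^2(a,b)=(\max(a,b))^2$ and $\mathbb{P}[\mathbb{A}_{UE}]=\int_0^\infty 2(\pi\lambda_b)^2x_{21}e^{-\pi\lambda_b x_{21}^2}\min^2\big(x_{21},M^{\frac{1}{\alpha\mu}}(N/P)^{\frac{2-\mu}{\alpha\mu}}x_{21}^{2/\mu}\big)\,\mathrm{d}x_{21}$.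
   Context: This models a downlink cellular network (base stations of density $\lambda_b$, transmit power $P$, noise power $N$, path-loss exponent $\alpha$) with a scheduling rule based on the "treating interference as noise" condition with design parameters $M,\mu$: $X_{11}$ is the serving distance of the typical user, $X_{21}$ its distance to the most interfering base station, and $\mathbb{A}_{UE}$ the event that the typical user is scheduled. The joint density is the model assumed by the paper. *)

theory Defs
  imports "HOL-Probability.Probability"
begin

definition joint_pdf :: "real \<Rightarrow> real \<times> real \<Rightarrow> ennreal" where
  "joint_pdf lb = (\<lambda>(x11, x21).
     if 0 < x11 \<and> x11 < x21
     then ennreal ((2 * pi * lb)^2 * x11 * x21 * exp (- pi * lb * x21^2))
     else 0)"

definition sched_coef :: "real \<Rightarrow> real \<Rightarrow> real \<Rightarrow> real \<Rightarrow> real \<Rightarrow> real" where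
  "sched_coef \<alpha> P N M \<mu> = M powr (1 / (\<alpha> * \<mu>)) * (N / P) powr ((2 - \<mu>) / (\<alpha> * \<mu>))"

end

theory Submission
  imports Defs "HOL-Real_Asymp.Real_Asymp"
begin

lemma le_powr_iff:
  fixes x y c \<mu> :: real
  assumes "x > 0" "y > 0" "c > 0" "\<mu> > 0"
  shows "x \<le> c * y powr (2/\<mu>) \<longleftrightarrow> (x/c) powr (\<mu>/2) \<le> y"
proof
  assume h: "x \<le> c * y powr (2/\<mu>)"
  then have "x/c \<le> y powr (2/\<mu>)" using assms by (simp add: field_simps)
  then have "(x/c) powr (\<mu>/2) \<le> (y powr (2/\<mu>)) powr (\<mu>/2)"
    by (intro powr_mono2) (use assms in auto)
  also have "\<dots> = y" using assms by (simp add: powr_powr)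
  finally show "(x/c) powr (\<mu>/2) \<le> y" .
next
  assume "(x/c) powr (\<mu>/2) \<le> y"
  then have "((x/c) powr (\<mu>/2)) powr (2/\<mu>) \<le> y powr (2/\<mu>)"
    by (intro powr_mono2) (use assms in auto)
  also have "((x/c) powr (\<mu>/2)) powr (2/\<mu>) = x/c" using assms by (simp add: powr_powr)
  finally show "x \<le> c * y powr (2/\<mu>)" using assms by (simp add: field_simps)
qed

lemma xint:
  fixes k m :: real
  assumes "k \<ge> 0" "m \<ge> 0"
  shows "(\<integral>\<^sup>+x. ennreal (k*x) * indicator {0..m} x \<partial>lborel) = ennreal (k*m^2/2)"
proof -
  have "(\<integral>\<^sup>+x\<in>{0..m}. ennreal (k*x) \<partial>lborel) = ennreal ((\<lambda>x. k*x^2/2) m - (\<lambda>x. k*x^2/2) 0)"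
    by (rule nn_integral_FTC_Icc) (use assms in \<open>auto intro!: derivative_eq_intros\<close>)
  then show ?thesis by simp
qed

lemma yint:
  fixes k q a :: real
  assumes "k \<ge> 0" "a \<ge> 0" "q > 0"
  shows "(\<integral>\<^sup>+y. ennreal (k*y*exp(-q*y^2)) * indicator {a..} y \<partial>lborel) = ennreal (k/(2*q) * exp(-q*a^2))"
proof -
  have lim: "((\<lambda>y. - (k/(2*q)) * exp(-q*y^2)) \<longlongrightarrow> 0) at_top"
    using assms by real_asymp
  have "(\<integral>\<^sup>+y\<in>{a..}. ennreal (k*y*exp(-q*y^2)) \<partial>lborel) = ennreal (0 - (\<lambda>y. - (k/(2*q)) * exp(-q*y^2)) a)"
    apply (rule nn_integral_FTC_atLeast[OF _ _ _ lim])
    using assms by (auto intro!: derivative_eq_intros simp: field_simps)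
  then show ?thesis by simp
qed


lemma S1_sets: "{z::real\<times>real. fst z \<le> c * snd z powr (2/\<mu>)} \<in> sets borel"
proof -
  have "Measurable.pred (borel \<Otimes>\<^sub>M borel) (\<lambda>z::real\<times>real. fst z \<le> c * snd z powr (2/\<mu>))" by measurable
  then show ?thesis by (simp add: pred_def borel_prod)
qed

lemma S2_sets: "B \<in> sets borel \<Longrightarrow> {z::real\<times>real. fst z \<in> B \<and> fst z \<le> c * snd z powr (2/\<mu>)} \<in> sets borel"
proof -
  assume "B \<in> sets borel"
  then have "Measurable.pred (borel \<Otimes>\<^sub>M borel) (\<lambda>z::real\<times>real. fst z \<in> B \<and> fst z \<le> c * snd z powr (2/\<mu>))" by measurable
  then show ?thesis by (simp add: pred_def borel_prod)
qed

lemma meas_pair: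
  fixes h :: "real\<times>real \<Rightarrow> ennreal"
  assumes "h \<in> borel_measurable borel"
  shows "h \<in> borel_measurable (lborel \<Otimes>\<^sub>M lborel)"
  using assms by (simp add: lborel_prod)

lemma dist_meas:
  fixes \<Omega> :: "'w measure" and X :: "'w \<Rightarrow> real \<times> real"
  assumes "distributed \<Omega> lborel X f" "S \<in> sets borel"
  shows "measure \<Omega> (X -` S \<inter> space \<Omega>) = enn2real (\<integral>\<^sup>+z. f z * indicator S z \<partial>lborel)"
proof -
  have D: "distr \<Omega> lborel X = density lborel f" and fm: "f \<in> borel_measurable lborel"
    and Xm: "X \<in> \<Omega> \<rightarrow>\<^sub>M lborel"
    using assms(1) unfolding distributed_def by auto
  have "measure \<Omega> (X -` S \<inter> space \<Omega>) = measure (distr \<Omega> lborel X) S"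
    using Xm assms(2) by (simp add: measure_distr)
  also have "\<dots> = enn2real (emeasure (density lborel f) S)"
    by (simp add: D measure_def)
  also have "\<dots> = enn2real (\<integral>\<^sup>+z. f z * indicator S z \<partial>lborel)"
    using fm assms(2) by (simp add: emeasure_density)
  finally show ?thesis .
qed

lemma powr_aux:
  fixes x c M N P q \<mu> :: real
  assumes "x > 0" "c > 0" "M > 0" "N > 0" "P > 0"
    and "c powr (\<mu>/2) = M powr (1/q) * (N/P) powr ((2-\<mu>)/q)"
  shows "(x/c) powr (\<mu>/2) = x powr (\<mu>/2) * (P/N) powr ((2-\<mu>)/q) * (1/M) powr (1/q)"
  using assms by (simp add: powr_divide powr_mult)

theorem lemma2:
  fixes \<Omega> :: "'w measure" and X11 X21 :: "'w \<Rightarrow> real"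
    and lb \<alpha> P N M \<mu> :: real
  assumes "lb > 0" and "\<alpha> > 2" and "P > 0" and "N > 0" and "M \<ge> 1"
    and "1 \<le> \<mu>" and "\<mu> \<le> 2"
    and "prob_space \<Omega>"
    and "distributed \<Omega> lborel (\<lambda>\<omega>. (X11 \<omega>, X21 \<omega>)) (joint_pdf lb)"
  defines "A \<equiv> {\<omega> \<in> space \<Omega>. X11 \<omega> \<le> sched_coef \<alpha> P N M \<mu> * X21 \<omega> powr (2 / \<mu>)}"
  defines "g \<equiv> (\<lambda>x11::real.
      2 * pi * lb * x11 *
      exp (- pi * lb * (max x11 (x11 powr (\<mu> / 2) * (P / N) powr ((2 - \<mu>) / (2 * \<alpha>))
                                   * (1 / M) powr (1 / (2 * \<alpha>))))^2)
      / measure \<Omega> A)"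
  shows "measure \<Omega> A =
           (LINT x21:{0<..}|lborel. 2 * (pi * lb)^2 * x21 * exp (- pi * lb * x21^2)
               * (min x21 (sched_coef \<alpha> P N M \<mu> * x21 powr (2 / \<mu>)))^2)
         \<and> (\<forall>B \<in> sets borel.
           measure \<Omega> ({\<omega> \<in> space \<Omega>. X11 \<omega> \<in> B} \<inter> A) / measure \<Omega> A
             = (LINT x11:(B \<inter> {0<..})|lborel. g x11))"
proof -
  define c where "c = sched_coef \<alpha> P N M \<mu>"
  define X where "X = (\<lambda>\<omega>. (X11 \<omega>, X21 \<omega>))"
  define f where "f = joint_pdf lb"
  have cpos: "c > 0" using assms(3-5) unfolding c_def sched_coef_def by auto
  have mupos: "\<mu> > 0" using assms(6) by simp
  have dist: "distributed \<Omega> lborel X f" using assms(9) unfolding X_def f_def .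
  have fm: "f \<in> borel_measurable borel"
    using dist unfolding distributed_def by auto
  have lbpos: "lb > 0" by fact
  define S1 where "S1 = {z::real\<times>real. fst z \<le> c * snd z powr (2/\<mu>)}"
  have S1s: "S1 \<in> sets borel" unfolding S1_def by (rule S1_sets)
  have AX: "A = X -` S1 \<inter> space \<Omega>" unfolding A_def X_def S1_def c_def by auto
  define h where "h = (\<lambda>y::real. 2 * (pi * lb)^2 * y * exp (- pi * lb * y^2)
               * (min y (c * y powr (2 / \<mu>)))^2)"
  have inner1: "(\<integral>\<^sup>+x. f (x, y) * indicator S1 (x, y) \<partial>lborel) = ennreal (indicator {0<..} y * h y)" for y
  proof (cases "y > 0")
    case False
    then have "(\<lambda>x. f (x, y) * indicator S1 (x, y)) = (\<lambda>x. 0)" unfolding f_def joint_pdf_def by auto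
    then show ?thesis using False by simp
  next
    case True
    define m where "m = min y (c * y powr (2 / \<mu>))"
    define k where "k = (2 * pi * lb)^2 * y * exp (- pi * lb * y^2)"
    have m0: "m \<ge> 0" unfolding m_def using True cpos by auto
    have k0: "k \<ge> 0" unfolding k_def using True lbpos by auto
    have "AE x in lborel. x \<noteq> 0" "AE x in lborel. x \<noteq> y" by (rule AE_lborel_singleton)+
    then have "AE x in lborel. f (x, y) * indicator S1 (x, y) = ennreal (k*x) * indicator {0..m} x"
    proof eventually_elim
      case (elim x)
      then show ?case unfolding f_def joint_pdf_def S1_def indicator_def m_def k_def
        by (auto simp: mult_ac)
    qed
    then have "(\<integral>\<^sup>+x. f (x, y) * indicator S1 (x, y) \<partial>lborel) = (\<integral>\<^sup>+x. ennreal (k*x) * indicator {0..m} x \<partial>lborel)"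
      by (rule nn_integral_cong_AE)
    also have "\<dots> = ennreal (k*m^2/2)" using k0 m0 by (rule xint)
    also have "k*m^2/2 = indicator {0<..} y * h y" using True unfolding k_def h_def m_def
      by (simp add: power_mult_distrib)
    finally show ?thesis .
  qed
  have hm: "h \<in> borel_measurable lborel" unfolding h_def by measurable
  have part1: "measure \<Omega> A = (LINT x21:{0<..}|lborel. h x21)"
  proof -
    have "measure \<Omega> A = enn2real (\<integral>\<^sup>+z. f z * indicator S1 z \<partial>lborel)"
      unfolding AX by (rule dist_meas[OF dist S1s])
    also have "(\<integral>\<^sup>+z. f z * indicator S1 z \<partial>lborel) = (\<integral>\<^sup>+z. f z * indicator S1 z \<partial>(lborel \<Otimes>\<^sub>M lborel))"
      by (simp add: lborel_prod)
    also have "\<dots> = (\<integral>\<^sup>+y. \<integral>\<^sup>+x. f (x, y) * indicator S1 (x, y) \<partial>lborel \<partial>lborel)"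
      by (rule lborel_pair.nn_integral_snd[symmetric]) (intro meas_pair, use fm S1s in measurable)
    also have "\<dots> = (\<integral>\<^sup>+y. ennreal (indicator {0<..} y * h y) \<partial>lborel)"
      by (simp add: inner1)
    also have "enn2real \<dots> = integral\<^sup>L lborel (\<lambda>y. indicator {0<..} y * h y)"
      by (rule integral_eq_nn_integral[symmetric]) (use hm in \<open>auto simp: h_def indicator_def\<close>)
    finally show ?thesis by (simp add: set_lebesgue_integral_def)
  qed
  define s where "s = (\<lambda>x::real. x powr (\<mu> / 2) * (P / N) powr ((2 - \<mu>) / (2 * \<alpha>))
                                   * (1 / M) powr (1 / (2 * \<alpha>)))"
  define G where "G = (\<lambda>x::real. 2 * pi * lb * x * exp (- pi * lb * (max x (s x))^2))"
  have gG: "g = (\<lambda>x. G x / measure \<Omega> A)" unfolding g_def G_def s_def ..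
  have s_eq: "(x/c) powr (\<mu>/2) = s x" if "x > 0" for x
  proof -
    have e1: "1/(\<alpha>*\<mu>) * (\<mu>/2) = 1/(2*\<alpha>)" and e2: "(2-\<mu>)/(\<alpha>*\<mu>) * (\<mu>/2) = (2-\<mu>)/(2*\<alpha>)"
      using mupos assms(2) by (simp_all add: field_simps)
    have "c powr (\<mu>/2) = (M powr (1/(\<alpha>*\<mu>))) powr (\<mu>/2) * ((N/P) powr ((2-\<mu>)/(\<alpha>*\<mu>))) powr (\<mu>/2)"
      unfolding c_def sched_coef_def by (rule powr_mult)
    also have "\<dots> = M powr (1/(2*\<alpha>)) * (N/P) powr ((2-\<mu>)/(2*\<alpha>))"
      unfolding powr_powr e1 e2 ..
    finally have cp: "c powr (\<mu>/2) = M powr (1/(2*\<alpha>)) * (N/P) powr ((2-\<mu>)/(2*\<alpha>))" .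
    show ?thesis unfolding s_def by (rule powr_aux[OF that cpos _ _ _ cp]) (use assms(3-5) in auto)
  qed
  have part2: "measure \<Omega> ({\<omega> \<in> space \<Omega>. X11 \<omega> \<in> B} \<inter> A) / measure \<Omega> A
             = (LINT x11:(B \<inter> {0<..})|lborel. g x11)" if B: "B \<in> sets borel" for B
  proof -
    define S2 where "S2 = {z::real\<times>real. fst z \<in> B \<and> fst z \<le> c * snd z powr (2/\<mu>)}"
    have S2s: "S2 \<in> sets borel" unfolding S2_def using B by (rule S2_sets)
    have BX: "{\<omega> \<in> space \<Omega>. X11 \<omega> \<in> B} \<inter> A = X -` S2 \<inter> space \<Omega>"
      unfolding A_def X_def S2_def c_def by auto
    have inner2: "(\<integral>\<^sup>+y. f (x, y) * indicator S2 (x, y) \<partial>lborel) = ennreal (indicator (B \<inter> {0<..}) x * G x)" for x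
    proof (cases "x > 0 \<and> x \<in> B")
      case False
      then have "(\<lambda>y. f (x, y) * indicator S2 (x, y)) = (\<lambda>y. 0)" unfolding f_def joint_pdf_def S2_def
        by (auto simp: indicator_def)
      then show ?thesis using False by (auto simp: indicator_def)
    next
      case True
      define t where "t = max x (s x)"
      define k where "k = (2 * pi * lb)^2 * x"
      have t0: "t \<ge> 0" unfolding t_def using True by auto
      have k0: "k \<ge> 0" unfolding k_def using True lbpos by auto
      have "AE y in lborel. y \<noteq> x" by (rule AE_lborel_singleton)
      then have "AE y in lborel. f (x, y) * indicator S2 (x, y) = ennreal (k*y*exp(-(pi*lb)*y^2)) * indicator {t..} y"
      proof eventually_elim
        case (elim y)
        show ?case
        proof (cases "x < y")
          case True
          with \<open>x > 0 \<and> x \<in> B\<close> have "x \<le> c * y powr (2/\<mu>) \<longleftrightarrow> s x \<le> y"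
            using le_powr_iff[of x y c \<mu>] cpos mupos s_eq by auto
          with True \<open>x > 0 \<and> x \<in> B\<close> show ?thesis
            unfolding f_def joint_pdf_def S2_def indicator_def t_def k_def
            by (auto simp: mult_ac)
        next
          case False
          with elim have "y < x" by simp
          then show ?thesis
            unfolding f_def joint_pdf_def S2_def indicator_def t_def k_def by auto
        qed
      qed
      then have "(\<integral>\<^sup>+y. f (x, y) * indicator S2 (x, y) \<partial>lborel) = (\<integral>\<^sup>+y. ennreal (k*y*exp(-(pi*lb)*y^2)) * indicator {t..} y \<partial>lborel)"
        by (rule nn_integral_cong_AE)
      also have "\<dots> = ennreal (k/(2*(pi*lb)) * exp(-(pi*lb)*t^2))"
        using k0 t0 lbpos by (intro yint) auto
      also have "k/(2*(pi*lb)) * exp(-(pi*lb)*t^2) = indicator (B \<inter> {0<..}) x * G x"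
        using True lbpos unfolding k_def G_def t_def by (simp add: power2_eq_square)
      finally show ?thesis .
    qed
    have Gm: "G \<in> borel_measurable lborel" unfolding G_def s_def by measurable
    have "measure \<Omega> ({\<omega> \<in> space \<Omega>. X11 \<omega> \<in> B} \<inter> A) = enn2real (\<integral>\<^sup>+z. f z * indicator S2 z \<partial>lborel)"
      unfolding BX by (rule dist_meas[OF dist S2s])
    also have "(\<integral>\<^sup>+z. f z * indicator S2 z \<partial>lborel) = (\<integral>\<^sup>+z. f z * indicator S2 z \<partial>(lborel \<Otimes>\<^sub>M lborel))"
      by (simp add: lborel_prod)
    also have "\<dots> = (\<integral>\<^sup>+x. \<integral>\<^sup>+y. f (x, y) * indicator S2 (x, y) \<partial>lborel \<partial>lborel)"
      by (rule lborel.nn_integral_fst[symmetric]) (intro meas_pair, use fm S2s in measurable)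
    also have "\<dots> = (\<integral>\<^sup>+x. ennreal (indicator (B \<inter> {0<..}) x * G x) \<partial>lborel)"
      by (simp add: inner2)
    also have "enn2real \<dots> = integral\<^sup>L lborel (\<lambda>x. indicator (B \<inter> {0<..}) x * G x)"
      by (rule integral_eq_nn_integral[symmetric])
        (use Gm B lbpos in \<open>auto simp: G_def indicator_def\<close>)
    also have "\<dots> = (LINT x:(B \<inter> {0<..})|lborel. G x)"
      by (simp add: set_lebesgue_integral_def)
    finally show ?thesis unfolding gG by simp
  qed
  show ?thesis using part1 part2 unfolding h_def c_def by blast
qed

end
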